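(* Let $\Sigma$ be a self-converse oriented graph on $n$ vertices such that $\det W(\Sigma)\neq 0$, and let $p$ be an odd prime. Suppose that $\mathrm{rank}_p\,W(\Sigma)=n-1$, where $\mathrm{rank}_p$ denotes rank over $\mathbb{F}_p$. Then $\ker W(\Sigma)^{\mathrm T}\subset\mathbb{F}_p^n$ is anisotropic; that is, if $v\in\mathbb{F}_p^n$, $v\neq 0$, and $W(\Sigma)^{\mathrm T}v=0$ over $\mathbb{F}_p$, then $v^{\mathrm T}v\neq 0$ in $\mathbb{F}_p$.
   Context: An oriented graph $\Sigma$ on vertex set $\{v_1,\dots,v_n\}$ is a simple graph in which every edge has been given a direction. Its skew adjacency matrix $S=S(\Sigma)=(S_{ij})$ is the $n\times n$ matrix with $S_{ij}=1$ if $(v_i,v_j)$ is a (directed) edge, $S_{ij}=-1$ if $(v_j,v_i)$ is an edge, and $S_{ij}=0$ otherwise. The walk-matrix of $\Sigma$ is $W(\Sigma)=[e,Se,\ldots,S^{n-1}e]$, where $e$ is the all-ones vector. $\Sigma$ is self-converse if there is a permutation matrix $P$ with $P^{\mathrm T}SP=S^{\mathrm T}=-S$ (equivalently, $\Sigma$ is isomorphic to the oriented graph obtained by reversing all its edges). A subspace $U\subset\mathbb{F}_p^n$ is anisotropic if $u^{\mathrm T}u\neq0$ for every nonzero $u\in U$. *)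

theory Defs
  imports "Jordan_Normal_Form.DL_Rank" "Berlekamp_Zassenhaus.Finite_Field"
begin

text \<open>An oriented graph on vertices 0..n-1 is encoded by its skew adjacency matrix S:
  an n x n integer matrix with entries in {-1,0,1} and S^T = -S
  (S i j = 1 iff (v_i,v_j) is an edge; hence zero diagonal, at most one direction per pair).\<close>
definition skew_adjacency_matrix :: "nat \<Rightarrow> int mat \<Rightarrow> bool" where
  "skew_adjacency_matrix n S \<longleftrightarrow> S \<in> carrier_mat n n \<and>
     (\<forall>i<n. \<forall>j<n. S $$ (i,j) \<in> {-1,0,1}) \<and> transpose_mat S = - S"

definition permutation_matrix :: "nat \<Rightarrow> int mat \<Rightarrow> bool" where
  "permutation_matrix n P \<longleftrightarrow> (\<exists>\<sigma>. \<sigma> permutes {..<n} \<and>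
     P = mat n n (\<lambda>(i,j). if \<sigma> j = i then 1 else 0))"

definition self_converse :: "nat \<Rightarrow> int mat \<Rightarrow> bool" where
  "self_converse n S \<longleftrightarrow> (\<exists>P. permutation_matrix n P \<and>
     transpose_mat P * S * P = transpose_mat S)"

definition walk_matrix :: "nat \<Rightarrow> int mat \<Rightarrow> int mat" where
  "walk_matrix n S = mat n n (\<lambda>(i,j). ((S ^\<^sub>m j) *\<^sub>v (vec n (\<lambda>_. 1))) $ i)"

definition mod_p_mat :: "int mat \<Rightarrow> 'p::prime_card mod_ring mat" where
  "mod_p_mat A = map_mat of_int A"

end

theory Submission
  imports Defs
begin


lemma mult_vec_sum:
  assumes "A \<in> carrier_mat n m" "v \<in> carrier_vec m" "i < n"
  shows "(A *\<^sub>v v) $ i = (\<Sum>j<m. A $$ (i,j) * v $ j)"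
  using assms by (auto simp: mult_mat_vec_def scalar_prod_def atLeast0LessThan intro!: sum.cong)

lemma mult_mat_sum:
  assumes "A \<in> carrier_mat n m" "B \<in> carrier_mat m l" "i < n" "j < l"
  shows "(A * B) $$ (i,j) = (\<Sum>k<m. A $$ (i,k) * B $$ (k,j))"
  using assms by (auto simp: scalar_prod_def atLeast0LessThan intro!: sum.cong)

lemma par_pred: "(m::nat) \<ge> 1 \<Longrightarrow> (m-1) mod 2 \<noteq> m mod 2" by (cases m) (auto simp: mod2_eq_if)
lemma b_lt: "(c::nat) < n div 2 \<Longrightarrow> n mod 2 + 2*c < n" using div_mult_mod_eq[of n 2] by linarith
lemma b_par: "((n::nat) mod 2 + 2*c) mod 2 = n mod 2" by simp
lemma b_div: "((n::nat) mod 2 + 2*c) div 2 = c" by simp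
lemma b_inv: "(k::nat) < n \<Longrightarrow> k mod 2 = n mod 2 \<Longrightarrow> k = n mod 2 + 2*(k div 2) \<and> k div 2 < n div 2"
  using div_mult_mod_eq[of n 2] div_mult_mod_eq[of k 2] by linarith
lemma pi_other: "(p::nat) < 2 \<Longrightarrow> p \<noteq> n mod 2 \<Longrightarrow> n \<ge> 1 \<Longrightarrow> p = (n-1) mod 2" by (cases n) (auto simp: mod2_eq_if)
lemma par_shift: "(k::nat) \<ge> 1 \<Longrightarrow> n \<ge> 1 \<Longrightarrow> (k-1) mod 2 = (n-1) mod 2 \<longleftrightarrow> k mod 2 = n mod 2" by (cases n; cases k) (auto simp: mod2_eq_if)
lemma par_pred2: "(n::nat) \<ge> 2 \<Longrightarrow> (n-2) mod 2 \<noteq> (n-1) mod 2" 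
  proof - assume "n \<ge> 2" then obtain m where "n = Suc (Suc m)" by (metis add_2_eq_Suc le_Suc_ex) then show ?thesis by (auto simp: mod2_eq_if) qed
lemma par_lt: "(k::nat) < n \<Longrightarrow> k mod 2 = n mod 2 \<Longrightarrow> Suc k < n" 
proof (rule ccontr)
  assume "k < n" "k mod 2 = n mod 2" "\<not> Suc k < n"
  then have "n = Suc k" by simp
  then show False using \<open>k mod 2 = n mod 2\<close> by (simp add: mod2_eq_if split: if_splits)
qed

fun wz :: "int mat \<Rightarrow> nat \<Rightarrow> nat \<Rightarrow> nat \<Rightarrow> int" where
  "wz S n 0 i = 1"
| "wz S n (Suc k) i = (\<Sum>j<n. S $$ (i,j) * wz S n k j)"

declare wz.simps(2)[simp del]

lemma pow_mat_carrier': "S \<in> carrier_mat n n \<Longrightarrow> S ^\<^sub>m k \<in> carrier_mat n n"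
  by (metis carrier_matI pow_mat_dim_square)

lemma pow_commute:
  assumes S: "S \<in> carrier_mat n n"
  shows "S ^\<^sub>m k * S = S * S ^\<^sub>m k"
proof (induct k)
  case 0
  then show ?case using S by simp
next
  case (Suc k)
  have P: "S ^\<^sub>m k \<in> carrier_mat n n" using pow_mat_carrier'[OF S] .
  have "S ^\<^sub>m Suc k * S = (S ^\<^sub>m k * S) * S" by simp
  also have "\<dots> = (S * S ^\<^sub>m k) * S" using Suc by simp
  also have "\<dots> = S * (S ^\<^sub>m k * S)" by (rule assoc_mult_mat[OF S P S])
  finally show ?case by simp
qed

lemma pow_vec:
  assumes S: "S \<in> carrier_mat n n"
  shows "i < n \<Longrightarrow> ((S ^\<^sub>m k) *\<^sub>v vec n (\<lambda>_. 1)) $ i = wz S n k i"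
proof (induct k arbitrary: i)
  case 0
  then show ?case using S by simp
next
  case (Suc k)
  have P: "S ^\<^sub>m k \<in> carrier_mat n n" using pow_mat_carrier'[OF S] .
  have "(S ^\<^sub>m Suc k) *\<^sub>v vec n (\<lambda>_. 1) = S *\<^sub>v ((S ^\<^sub>m k) *\<^sub>v vec n (\<lambda>_. 1))"
    using pow_commute[OF S, of k] assoc_mult_mat_vec[OF S P, of "vec n (\<lambda>_. 1)"] by simp
  then have "((S ^\<^sub>m Suc k) *\<^sub>v vec n (\<lambda>_. 1)) $ i = (\<Sum>j<n. S $$ (i,j) * ((S ^\<^sub>m k) *\<^sub>v vec n (\<lambda>_. 1)) $ j)"
    using mult_vec_sum[OF S _ Suc.prems] P by simp
  also have "\<dots> = (\<Sum>j<n. S $$ (i,j) * wz S n k j)"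
    using Suc.hyps by (intro sum.cong) auto
  finally show ?case by (simp add: wz.simps)
qed

lemma walk_entry:
  assumes S: "S \<in> carrier_mat n n" and "i < n" "k < n"
  shows "walk_matrix n S $$ (i,k) = wz S n k i"
  using assms pow_vec[OF S] by (simp add: walk_matrix_def)

lemma walk_carrier: "walk_matrix n S \<in> carrier_mat n n"
  by (simp add: walk_matrix_def)

locale sc_setting =
  fixes n :: nat and S :: "int mat" and \<sigma> :: "nat \<Rightarrow> nat"
  assumes S_carrier: "S \<in> carrier_mat n n"
  and skew: "\<And>i j. i < n \<Longrightarrow> j < n \<Longrightarrow> S $$ (j,i) = - S $$ (i,j)"
  and perm: "\<sigma> permutes {..<n}"
  and sc: "\<And>i j. i < n \<Longrightarrow> j < n \<Longrightarrow> S $$ (\<sigma> i, \<sigma> j) = - S $$ (i,j)"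
  and detW: "det (walk_matrix n S) \<noteq> 0"
begin

abbreviation w where "w k i \<equiv> wz S n k i"

lemma sig_lt: "i < n \<Longrightarrow> \<sigma> i < n"
  using permutes_in_image[OF perm] by auto

lemma sig_bij: "bij_betw \<sigma> {..<n} {..<n}"
  using permutes_imp_bij[OF perm] .

lemma sum_sig: "(\<Sum>i<n. g (\<sigma> i)) = (\<Sum>i<n. g i)"
  using sum.reindex_bij_betw[OF sig_bij] .

lemma dot_shift:
  "(\<Sum>i<n. w (Suc a) i * w b i) = - (\<Sum>i<n. w a i * w (Suc b) i)"
proof -
  have "(\<Sum>i<n. w (Suc a) i * w b i) = (\<Sum>i<n. \<Sum>j<n. S$$(i,j) * w a j * w b i)"
    by (simp add: sum_distrib_right wz.simps)
  also have "\<dots> = (\<Sum>j<n. \<Sum>i<n. S$$(i,j) * w a j * w b i)" by (rule sum.swap)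
  also have "\<dots> = (\<Sum>j<n. \<Sum>i<n. - (w a j * (S$$(j,i) * w b i)))"
  proof (rule sum.cong[OF refl], rule sum.cong[OF refl])
    fix j i assume "j \<in> {..<n}" "i \<in> {..<n}"
    then have "S$$(i,j) = - S$$(j,i)" using skew[of j i] by simp
    then show "S$$(i,j) * w a j * w b i = - (w a j * (S$$(j,i) * w b i))" by simp
  qed
  also have "\<dots> = - (\<Sum>j<n. w a j * (\<Sum>i<n. S$$(j,i) * w b i))"
    by (simp add: sum_distrib_left sum_negf)
  finally show ?thesis by (simp add: wz.simps)
qed

lemma dot_formula:
  "(\<Sum>i<n. w a i * w b i) = (-1)^a * (\<Sum>i<n. w 0 i * w (a+b) i)"
proof (induct a arbitrary: b)
  case 0 then show ?case by simp
next
  case (Suc a)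
  show ?case unfolding dot_shift Suc by simp
qed

lemma dot_odd: assumes "odd c" shows "(\<Sum>i<n. w 0 i * w c i) = 0"
proof -
  obtain j where c: "c = 2*j+1" using assms oddE by blast
  let ?D = "(\<Sum>i<n. w 0 i * w c i)"
  have 1: "(\<Sum>i<n. w j i * w (j+1) i) = (-1)^j * ?D" using dot_formula[of j "j+1"] c by (simp add: mult_2)
  have 2: "(\<Sum>i<n. w (j+1) i * w j i) = (-1)^(j+1) * ?D" using dot_formula[of "j+1" j] c by (simp add: mult_2)
  have "(\<Sum>i<n. w j i * w (j+1) i) = (\<Sum>i<n. w (j+1) i * w j i)" by (simp add: mult.commute)
  then have "(-1)^j * ?D = - ((-1)^j * ?D)" using 1 2 by simp
  then show ?thesis by simp
qed

lemma orth: "odd (a+b) \<Longrightarrow> (\<Sum>i<n. w a i * w b i) = 0"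
  using dot_formula dot_odd by simp

lemma w_sigma: "i < n \<Longrightarrow> w k (\<sigma> i) = (-1)^k * w k i"
proof (induct k arbitrary: i)
  case 0 then show ?case by simp
next
  case (Suc k)
  have "w (Suc k) (\<sigma> i) = (\<Sum>j<n. S $$ (\<sigma> i, j) * w k j)" by (simp add: wz.simps)
  also have "\<dots> = (\<Sum>j<n. S $$ (\<sigma> i, \<sigma> j) * w k (\<sigma> j))"
    by (rule sum_sig[symmetric])
  also have "\<dots> = (\<Sum>j<n. (-1)^(Suc k) * (S $$ (i, j) * w k j))"
    using Suc sc by (intro sum.cong refl) auto
  also have "\<dots> = (-1)^(Suc k) * w (Suc k) i" by (simp add: sum_distrib_left wz.simps)
  finally show ?case .
qed

lemma sig_invol: assumes i: "i < n" shows "\<sigma> (\<sigma> i) = i"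
proof (rule ccontr)
  assume ne: "\<sigma> (\<sigma> i) \<noteq> i"
  have l: "\<sigma> (\<sigma> i) < n" using sig_lt i by auto
  have "row (walk_matrix n S) (\<sigma> (\<sigma> i)) = row (walk_matrix n S) i"
  proof (rule eq_vecI)
    fix k assume "k < dim_vec (row (walk_matrix n S) i)"
    then have k: "k < n" by (simp add: walk_matrix_def)
    have "w k (\<sigma> (\<sigma> i)) = w k i" using w_sigma i sig_lt
      by (simp add: power_mult_distrib[symmetric])
    then show "row (walk_matrix n S) (\<sigma> (\<sigma> i)) $ k = row (walk_matrix n S) i $ k"
      using walk_entry[OF S_carrier] k i l by (simp add: walk_matrix_def)
  qed (simp add: walk_matrix_def)
  then have "det (walk_matrix n S) = 0"
    using det_identical_rows[OF walk_carrier ne l i] by simp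
  then show False using detW by simp
qed

lemma sum_neg1: "(\<Sum>k<n. (-1::int)^k) = int (n mod 2)"
proof (induct n)
  case (Suc n)
  have e: "(\<Sum>k<Suc n. (-1::int)^k) = int (n mod 2) + (-1)^n" using Suc by simp
  show ?case
  proof (cases "even n")
    case True
    then have "n mod 2 = 0" "Suc n mod 2 = 1" by presburger+
    then show ?thesis using e True by simp
  next
    case False
    then have "n mod 2 = 1" "Suc n mod 2 = 0" by presburger+
    then show ?thesis using e False by simp
  qed
qed simp

lemma W_sigma: "i < n \<Longrightarrow> k < n \<Longrightarrow> walk_matrix n S $$ (\<sigma> i, k) = (-1)^k * walk_matrix n S $$ (i, k)"
  using walk_entry[OF S_carrier] w_sigma sig_lt by simp

lemma fixed_card: "card {i. i < n \<and> \<sigma> i = i} = n mod 2"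
proof -
  let ?W = "walk_matrix n S"
  let ?A = "adj_mat ?W"
  have W: "?W \<in> carrier_mat n n" by (rule walk_carrier)
  have A: "?A \<in> carrier_mat n n" using adj_mat[OF W] by simp
  have WA: "?W * ?A = det ?W \<cdot>\<^sub>m 1\<^sub>m n" using adj_mat(2)[OF W] .
  have AW: "?A * ?W = det ?W \<cdot>\<^sub>m 1\<^sub>m n" using adj_mat(3)[OF W] .
  define T where "T = (\<Sum>i<n. \<Sum>k<n. ?W $$ (\<sigma> i, k) * ?A $$ (k, i))"
  have "T = (\<Sum>i<n. (?W * ?A) $$ (\<sigma> i, i))"
    unfolding T_def
  proof (rule sum.cong[OF refl])
    fix i assume "i \<in> {..<n}"
    then show "(\<Sum>k<n. ?W $$ (\<sigma> i, k) * ?A $$ (k, i)) = (?W * ?A) $$ (\<sigma> i, i)"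
      using mult_mat_sum[OF W A, of "\<sigma> i" i] sig_lt by simp
  qed
  also have "\<dots> = (\<Sum>i<n. if \<sigma> i = i then det ?W else 0)"
  proof (rule sum.cong[OF refl])
    fix i assume "i \<in> {..<n}"
    then show "(?W * ?A) $$ (\<sigma> i, i) = (if \<sigma> i = i then det ?W else 0)"
      unfolding WA using sig_lt by simp
  qed
  also have "\<dots> = (\<Sum>i\<in>{i. i < n \<and> \<sigma> i = i}. det ?W)"
    by (simp add: sum.If_cases lessThan_def Collect_conj_eq)
  finally have T1: "T = det ?W * int (card {i. i < n \<and> \<sigma> i = i})" by simp
  have "T = (\<Sum>i<n. \<Sum>k<n. (-1)^k * (?A $$ (k, i) * ?W $$ (i, k)))"
    unfolding T_def
  proof (rule sum.cong[OF refl], rule sum.cong[OF refl])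
    fix i k assume "i \<in> {..<n}" "k \<in> {..<n}"
    then show "?W $$ (\<sigma> i, k) * ?A $$ (k, i) = (-1)^k * (?A $$ (k, i) * ?W $$ (i, k))"
      using W_sigma[of i k] by simp
  qed
  also have "\<dots> = (\<Sum>k<n. \<Sum>i<n. (-1)^k * (?A $$ (k, i) * ?W $$ (i, k)))"
    by (rule sum.swap)
  also have "\<dots> = (\<Sum>k<n. (-1)^k * (?A * ?W) $$ (k, k))"
  proof (rule sum.cong[OF refl])
    fix k assume "k \<in> {..<n}"
    then show "(\<Sum>i<n. (-1)^k * (?A $$ (k, i) * ?W $$ (i, k))) = (-1)^k * (?A * ?W) $$ (k, k)"
      using mult_mat_sum[OF A W, of k k] by (simp add: sum_distrib_left)
  qed
  also have "\<dots> = (\<Sum>k<n. det ?W * (-1)^k)"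
    by (rule sum.cong[OF refl]) (simp add: AW)
  also have "\<dots> = det ?W * int (n mod 2)"
    by (simp add: sum_distrib_left[symmetric] sum_neg1)
  finally have "det ?W * int (card {i. i < n \<and> \<sigma> i = i}) = det ?W * int (n mod 2)"
    using T1 by simp
  then have "int (card {i. i < n \<and> \<sigma> i = i}) = int (n mod 2)"
    using detW mult_left_cancel by blast
  then show ?thesis by (simp only: of_nat_eq_iff)
qed

definition "Ahalf = {i. i < n \<and> i < \<sigma> i}"

lemma Ahalf_card: "card Ahalf = n div 2"
proof -
  let ?B = "{i. i < n \<and> \<sigma> i < i}"
  let ?F = "{i. i < n \<and> \<sigma> i = i}"
  have un: "{..<n} = (Ahalf \<union> ?B) \<union> ?F" unfolding Ahalf_def by auto
  have img: "\<sigma> ` Ahalf = ?B"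
  proof
    show "\<sigma> ` Ahalf \<subseteq> ?B" unfolding Ahalf_def using sig_lt sig_invol by auto
    show "?B \<subseteq> \<sigma> ` Ahalf"
    proof
      fix i assume "i \<in> ?B"
      then have "\<sigma> i \<in> Ahalf" "i = \<sigma> (\<sigma> i)" unfolding Ahalf_def using sig_lt sig_invol by auto
      then show "i \<in> \<sigma> ` Ahalf" by blast
    qed
  qed
  have inj: "inj_on \<sigma> Ahalf"
    by (rule inj_on_subset[OF bij_betw_imp_inj_on[OF sig_bij]]) (auto simp: Ahalf_def)
  have cB: "card ?B = card Ahalf" using card_image[OF inj] img by simp
  have f1: "finite Ahalf" "finite ?B" "finite ?F" unfolding Ahalf_def by auto
  have d1: "Ahalf \<inter> ?B = {}" unfolding Ahalf_def by auto
  have d2: "(Ahalf \<union> ?B) \<inter> ?F = {}" unfolding Ahalf_def by auto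
  have "n = card ((Ahalf \<union> ?B) \<union> ?F)" using un by (metis card_lessThan)
  also have "\<dots> = card (Ahalf \<union> ?B) + card ?F"
    using f1 d2 by (intro card_Un_disjoint) auto
  also have "card (Ahalf \<union> ?B) = card Ahalf + card ?B"
    using f1 d1 by (intro card_Un_disjoint) auto
  finally have "n = 2 * card Ahalf + n mod 2" using cB fixed_card by simp
  then show ?thesis using div_mult_mod_eq[of n 2] by linarith
qed

end


locale sc_field = sc_setting n S \<sigma> for n S \<sigma> +
  fixes om :: "nat \<Rightarrow> nat \<Rightarrow> 'a::field" and sk :: "nat \<Rightarrow> nat \<Rightarrow> 'a" and j0 :: nat
  assumes om_def: "om k i = of_int (wz S n k i)"
  and sk_def: "sk i j = of_int (S $$ (i,j))"
  and two: "(2::'a) \<noteq> 0"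
  and j0: "j0 < n"
  and indep: "\<And>y k. (\<And>i. i < n \<Longrightarrow> (\<Sum>k<n. om k i * y k) = 0) \<Longrightarrow> y j0 = 0 \<Longrightarrow> k < n \<Longrightarrow> y k = 0"
  and dep: "\<exists>u. (\<forall>i<n. (\<Sum>k<n. om k i * u k) = 0) \<and> (\<exists>k<n. u k \<noteq> 0)"
begin

definition Wf :: "(nat \<Rightarrow> 'a) \<Rightarrow> nat \<Rightarrow> 'a" where
  "Wf y i = (\<Sum>k<n. om k i * y k)"

definition rel :: "(nat \<Rightarrow> 'a) \<Rightarrow> bool" where
  "rel y \<longleftrightarrow> (\<forall>i<n. Wf y i = 0)"

definition par_supp :: "nat \<Rightarrow> (nat \<Rightarrow> 'a) \<Rightarrow> bool" where
  "par_supp p y \<longleftrightarrow> (\<forall>k<n. k mod 2 \<noteq> p \<longrightarrow> y k = 0)"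

abbreviation "\<delta> \<equiv> ((-1)::'a)^n"

lemma n_pos: "n \<ge> 1" using j0 by simp

lemma two_cancel: "(x::'a) + x = 0 \<Longrightarrow> x = 0"
  using two by (metis mult_2 mult_eq_0_iff)

lemma om_Suc: "i < n \<Longrightarrow> om (Suc k) i = (\<Sum>j<n. sk i j * om k j)"
  by (simp add: om_def sk_def wz.simps)

lemma om_orth: "odd (a+b) \<Longrightarrow> (\<Sum>i<n. om a i * om b i) = 0"
proof -
  assume "odd (a+b)"
  then have "(\<Sum>i<n. w a i * w b i) = 0" by (rule orth)
  then have "of_int (\<Sum>i<n. w a i * w b i) = (0::'a)" by simp
  then show ?thesis by (simp add: om_def)
qed

lemma om_sigma: "i < n \<Longrightarrow> om k (\<sigma> i) = (-1)^k * om k i"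
  by (simp add: om_def w_sigma)

lemma sk_skew: "i < n \<Longrightarrow> j < n \<Longrightarrow> sk i j = - sk j i"
  using skew[of j i] by (simp add: sk_def)

lemma neg1_par: "k mod 2 = p mod 2 \<Longrightarrow> ((-1)::'a)^k = (-1)^p"
  by (metis even_iff_mod_2_eq_zero neg_one_even_power neg_one_odd_power)

lemma neg1_npar: "k mod 2 \<noteq> p mod 2 \<Longrightarrow> ((-1)::'a)^k = - (((-1)::'a)^p)"
  by (metis even_iff_mod_2_eq_zero neg_one_even_power neg_one_odd_power minus_minus mod2_eq_if)

lemma delta_sq: "\<delta> * \<delta> = 1"
  by (simp add: power_mult_distrib[symmetric])

lemma Wf_D: "i < n \<Longrightarrow> Wf (\<lambda>k. (-1)^k * y k) i = Wf y (\<sigma> i)"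
  unfolding Wf_def using om_sigma by (intro sum.cong refl) (simp add: algebra_simps)

lemma rel_lin: "rel y \<Longrightarrow> rel z \<Longrightarrow> rel (\<lambda>k. a * y k + b * z k)"
  unfolding rel_def Wf_def
  by (simp add: algebra_simps sum.distrib sum_distrib_left[symmetric])

definition u where "u = (SOME u. rel u \<and> u j0 \<noteq> 0)"

lemma u_prop: "rel u" "u j0 \<noteq> 0"
proof -
  obtain u' where u': "\<forall>i<n. (\<Sum>k<n. om k i * u' k) = 0" "\<exists>k<n. u' k \<noteq> 0" using dep by blast
  have "u' j0 \<noteq> 0" using indep[of u'] u' by blast
  then have "\<exists>u. rel u \<and> u j0 \<noteq> 0" using u' by (auto simp: rel_def Wf_def)
  then show "rel u" "u j0 \<noteq> 0" unfolding u_def by (metis (mono_tags, lifting) someI_ex)+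
qed

lemma uniq: assumes "rel y" "k < n" shows "y k = (y j0 / u j0) * u k"
proof -
  let ?c = "y j0 / u j0"
  have r: "rel (\<lambda>k. 1 * y k + (- ?c) * u k)" using rel_lin[OF assms(1) u_prop(1)] .
  have "1 * y j0 + (- ?c) * u j0 = 0" using u_prop(2) by simp
  then have "1 * y k + (- ?c) * u k = 0"
    using indep[of "\<lambda>k. 1 * y k + (- ?c) * u k"] r assms(2) unfolding rel_def Wf_def by blast
  then show ?thesis by simp
qed

lemma rel_D: "rel y \<Longrightarrow> rel (\<lambda>k. (-1)^k * y k)"
  unfolding rel_def using Wf_D sig_lt by simp

lemma shift_lemma:
  assumes yz: "y (n-1) = 0" and i: "i < n"
  shows "Wf (\<lambda>k. if k = 0 then 0 else y (k-1)) i = (\<Sum>j<n. sk i j * Wf y j)"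
proof -
  obtain n' where n': "n = Suc n'" using n_pos by (cases n) auto
  have "Wf (\<lambda>k. if k = 0 then 0 else y (k-1)) i = (\<Sum>k<n. om k i * (if k = 0 then 0 else y (k-1)))"
    by (simp add: Wf_def)
  also have "\<dots> = (\<Sum>k<Suc n'. om k i * (if k = 0 then 0 else y (k-1)))"
    by (simp only: n')
  also have "\<dots> = (\<Sum>k<n'. om (Suc k) i * y k)"
    by (subst sum.lessThan_Suc_shift) simp
  also have "\<dots> = (\<Sum>k<n'. \<Sum>j<n. sk i j * om k j * y k)"
    using om_Suc[OF i] by (simp add: sum_distrib_right)
  also have "\<dots> = (\<Sum>j<n. \<Sum>k<n'. sk i j * om k j * y k)" by (rule sum.swap)
  also have "\<dots> = (\<Sum>j<n. sk i j * Wf y j)"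
  proof (rule sum.cong[OF refl])
    fix j
    have "Wf y j = (\<Sum>k<Suc n'. om k j * y k)" unfolding Wf_def by (simp only: n')
    also have "\<dots> = (\<Sum>k<n'. om k j * y k)" using yz n' by simp
    finally have "Wf y j = (\<Sum>k<n'. om k j * y k)" .
    then show "(\<Sum>k<n'. sk i j * om k j * y k) = sk i j * Wf y j"
      by (simp add: sum_distrib_left mult.assoc)
  qed
  finally show ?thesis .
qed

lemma u_last: "u (n-1) \<noteq> 0"
proof
  assume u0: "u (n-1) = 0"
  define y where "y = (\<lambda>k. if k = 0 then 0 else u (k-1))"
  have ry: "rel y" unfolding rel_def y_def
    using shift_lemma[of u, OF u0] u_prop(1) unfolding rel_def by simp
  let ?M = "{k. k < n \<and> u k \<noteq> 0}"
  have fin: "finite ?M" by simp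
  have ne: "j0 \<in> ?M" using j0 u_prop by simp
  define j where "j = Max ?M"
  have jM: "j \<in> ?M" unfolding j_def using fin ne Max_in by blast
  have jn: "j \<noteq> n-1" using jM u0 by auto
  then have j1: "Suc j < n" using jM by auto
  have "y (Suc j) = u j" unfolding y_def by simp
  then have "y (Suc j) \<noteq> 0" using jM by simp
  then have "u (Suc j) \<noteq> 0" using uniq[OF ry j1] by auto
  then have "Suc j \<in> ?M" using j1 by simp
  then have "Suc j \<le> j" unfolding j_def using fin Max_ge by blast
  then show False by simp
qed

lemma rel_last0: assumes "rel y" "y (n-1) = 0" "k < n" shows "y k = 0"
proof -
  have "y (n-1) = (y j0 / u j0) * u (n-1)" using uniq[OF assms(1)] n_pos by simp
  then have "y j0 / u j0 = 0" using assms(2) u_last by simp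
  then show ?thesis using uniq[OF assms(1,3)] by (metis mult_zero_left)
qed

lemma u_par: "par_supp ((n-1) mod 2) u"
  unfolding par_supp_def
proof (intro allI impI)
  fix k assume k: "k < n" and kp: "k mod 2 \<noteq> (n-1) mod 2"
  have r: "rel (\<lambda>k. (-1)^k * u k)" using rel_D[OF u_prop(1)] .
  let ?c = "(-1)^j0 * u j0 / u j0"
  have a: "(-1)^(n-1) * u (n-1) = ?c * u (n-1)" using uniq[OF r] n_pos by simp
  have c: "?c = (-1)^(n-1)" using a u_last by simp
  have "(-1)^k * u k = ?c * u k" using uniq[OF r k] by simp
  then have "- ((-1)^(n-1) * u k) = (-1)^(n-1) * u k"
    using c neg1_npar[OF kp] by simp
  then have "(-1)^(n-1) * u k + (-1)^(n-1) * u k = 0" by (simp add: add_eq_0_iff)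
  then have "(-1)^(n-1) * u k = 0" by (rule two_cancel)
  then show "u k = 0" by simp
qed

end


context sc_field begin

lemma E0:
  assumes xs: "\<And>i. i < n \<Longrightarrow> x (\<sigma> i) = \<delta> * x i"
    and xa: "\<And>i. i \<in> Ahalf \<Longrightarrow> x i = 0" and i: "i < n"
  shows "x i = 0"
proof -
  consider "i < \<sigma> i" | "\<sigma> i < i" | "\<sigma> i = i" by linarith
  then show ?thesis
  proof cases
    case 1 then show ?thesis using xa i by (simp add: Ahalf_def)
  next
    case 2
    have "\<sigma> i \<in> Ahalf" using 2 sig_lt[OF i] sig_invol[OF i] by (simp add: Ahalf_def)
    then have z: "x (\<sigma> i) = 0" by (rule xa)
    have "x (\<sigma> (\<sigma> i)) = \<delta> * x (\<sigma> i)" using xs sig_lt i by simp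
    then show ?thesis using sig_invol[OF i] z by simp
  next
    case 3
    then have e: "x i = \<delta> * x i" using xs[OF i] by simp
    show ?thesis
    proof (cases "even n")
      case True
      have "i \<in> {i. i < n \<and> \<sigma> i = i}" using 3 i by simp
      then have "card {i. i < n \<and> \<sigma> i = i} \<noteq> 0" by (auto simp: card_eq_0_iff)
      then show ?thesis using fixed_card True by simp
    next
      case False
      then have "x i = - x i" using e by simp
      then have "x i + x i = 0" by (metis add.right_inverse)
      then show ?thesis by (rule two_cancel)
    qed
  qed
qed

lemma Wf_sig_par: assumes p: "par_supp (n mod 2) t" and i: "i < n"
  shows "Wf t (\<sigma> i) = \<delta> * Wf t i"
proof -
  have "Wf t (\<sigma> i) = (\<Sum>k<n. \<delta> * (om k i * t k))"
    unfolding Wf_def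
  proof (rule sum.cong[OF refl])
    fix k assume k: "k \<in> {..<n}"
    show "om k (\<sigma> i) * t k = \<delta> * (om k i * t k)"
    proof (cases "k mod 2 = n mod 2")
      case True then show ?thesis using om_sigma[OF i] neg1_par[OF True] by simp
    next
      case False then have "t k = 0" using p k unfolding par_supp_def by simp
      then show ?thesis by simp
    qed
  qed
  also have "\<dots> = \<delta> * Wf t i" unfolding Wf_def by (simp add: sum_distrib_left)
  finally show ?thesis .
qed

lemma E1: assumes p: "par_supp (n mod 2) t" and a: "\<And>i. i \<in> Ahalf \<Longrightarrow> Wf t i = 0" and k: "k < n"
  shows "t k = 0"
proof -
  have r: "rel t" unfolding rel_def
  proof (intro allI impI)
    fix i assume i: "i < n"
    show "Wf t i = 0"
    proof (rule E0[of "Wf t", OF _ _ i])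
      fix j assume "j < n" then show "Wf t (\<sigma> j) = \<delta> * Wf t j" by (rule Wf_sig_par[OF p])
    next
      fix j assume "j \<in> Ahalf" then show "Wf t j = 0" by (rule a)
    qed
  qed
  have "(n-1) mod 2 \<noteq> n mod 2" using par_pred[OF n_pos] .
  then have "t (n-1) = 0" using p n_pos unfolding par_supp_def by simp
  then show ?thesis using rel_last0[OF r _ k] by simp
qed

lemma E_span: assumes xs: "\<And>i. i < n \<Longrightarrow> x (\<sigma> i) = \<delta> * x i"
  shows "\<exists>t. par_supp (n mod 2) t \<and> (\<forall>i<n. x i = Wf t i)"
proof -
  define m where "m = n div 2"
  have finA: "finite Ahalf" unfolding Ahalf_def by simp
  obtain a where a: "bij_betw a {0..<m} Ahalf"
    using ex_bij_betw_nat_finite[OF finA] Ahalf_card unfolding m_def by metis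
  have a_lt: "\<And>r. r < m \<Longrightarrow> a r \<in> Ahalf" using a unfolding bij_betw_def by auto
  have a_surj: "\<exists>r<m. i = a r" if "i \<in> Ahalf" for i
  proof -
    have "i \<in> a ` {0..<m}" using a that by (simp add: bij_betw_def)
    then show ?thesis by auto
  qed
  have aA: "\<And>i. i \<in> Ahalf \<Longrightarrow> i < n" unfolding Ahalf_def by simp
  define b where "b c = n mod 2 + 2 * c" for c
  have b_lt: "\<And>c. c < m \<Longrightarrow> b c < n" unfolding b_def m_def by (rule b_lt)
  have b_par: "\<And>c. b c mod 2 = n mod 2" unfolding b_def by (rule b_par)
  have b_div: "\<And>c. b c div 2 = c" unfolding b_def by (rule b_div)
  have b_inj: "inj_on b {..<m}" unfolding b_def inj_on_def by simp
  have b_img: "{..<n} \<inter> {k. k mod 2 = n mod 2} = b ` {..<m}"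
  proof
    show "{..<n} \<inter> {k. k mod 2 = n mod 2} \<subseteq> b ` {..<m}"
    proof
      fix k assume "k \<in> {..<n} \<inter> {k. k mod 2 = n mod 2}"
      then have "k < n" "k mod 2 = n mod 2" by auto
      then have "k = b (k div 2)" "k div 2 < m" unfolding b_def m_def using b_inv by blast+
      then show "k \<in> b ` {..<m}" by blast
    qed
    show "b ` {..<m} \<subseteq> {..<n} \<inter> {k. k mod 2 = n mod 2}" using b_lt b_par by auto
  qed
  define tv where "tv s k = (if k < n \<and> k mod 2 = n mod 2 then s $ (k div 2) else 0)" for s :: "'a vec" and k
  have tv_par: "\<And>s. par_supp (n mod 2) (tv s)" unfolding par_supp_def tv_def by simp
  have tv_b: "\<And>s c. c < m \<Longrightarrow> tv s (b c) = s $ c" unfolding tv_def using b_lt b_par b_div by simp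
  have Wf_tv: "\<And>s i. Wf (tv s) i = (\<Sum>c<m. om (b c) i * s $ c)"
  proof -
    fix s i
    have "Wf (tv s) i = (\<Sum>k<n. if k \<in> {k. k mod 2 = n mod 2} then om k i * s $ (k div 2) else 0)"
      unfolding Wf_def tv_def by (intro sum.cong refl) auto
    also have "\<dots> = (\<Sum>k \<in> {..<n} \<inter> {k. k mod 2 = n mod 2}. om k i * s $ (k div 2))"
      by (rule sum.inter_restrict[symmetric]) simp
    also have "\<dots> = (\<Sum>k \<in> b ` {..<m}. om k i * s $ (k div 2))" unfolding b_img ..
    also have "\<dots> = (\<Sum>c<m. om (b c) i * s $ (b c div 2))"
      using sum.reindex[OF b_inj] by simp
    also have "\<dots> = (\<Sum>c<m. om (b c) i * s $ c)" using b_div by simp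
    finally show "Wf (tv s) i = (\<Sum>c<m. om (b c) i * s $ c)" .
  qed
  define RM where "RM = mat m m (\<lambda>(r,c). om (b c) (a r))"
  have RM: "RM \<in> carrier_mat m m" unfolding RM_def by simp
  have RMs: "\<And>s r. s \<in> carrier_vec m \<Longrightarrow> r < m \<Longrightarrow> (RM *\<^sub>v s) $ r = Wf (tv s) (a r)"
    using mult_vec_sum[OF RM] Wf_tv unfolding RM_def by simp
  have detRM: "det RM \<noteq> 0"
  proof
    assume "det RM = 0"
    then obtain s where s: "s \<in> carrier_vec m" "s \<noteq> 0\<^sub>v m" "RM *\<^sub>v s = 0\<^sub>v m"
      using det_0_iff_vec_prod_zero_field[OF RM] by blast
    have "\<And>i. i \<in> Ahalf \<Longrightarrow> Wf (tv s) i = 0"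
    proof -
      fix i assume "i \<in> Ahalf"
      then obtain r where r: "r < m" "i = a r" using a_surj by blast
      then show "Wf (tv s) i = 0" using RMs[OF s(1) r(1)] s(3) by simp
    qed
    then have "\<And>k. k < n \<Longrightarrow> tv s k = 0" using E1[OF tv_par] by blast
    then have "\<And>c. c < m \<Longrightarrow> s $ c = 0" using tv_b b_lt by metis
    then have "s = 0\<^sub>v m" using s(1) by (intro eq_vecI) auto
    then show False using s(2) by simp
  qed
  define rhs where "rhs = vec m (\<lambda>r. x (a r))"
  define adj where "adj = adj_mat RM"
  have adj: "adj \<in> carrier_mat m m" "RM * adj = det RM \<cdot>\<^sub>m 1\<^sub>m m" unfolding adj_def using adj_mat[OF RM] by auto
  define s where "s = vec m (\<lambda>c. (\<Sum>r<m. adj $$ (c, r) * rhs $ r) / det RM)"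
  have sc: "s \<in> carrier_vec m" unfolding s_def by simp
  have RMsol: "\<And>r. r < m \<Longrightarrow> (RM *\<^sub>v s) $ r = x (a r)"
  proof -
    fix r assume r: "r < m"
    have "(RM *\<^sub>v s) $ r = (\<Sum>c<m. RM $$ (r,c) * ((\<Sum>r'<m. adj $$ (c, r') * rhs $ r') / det RM))"
      using mult_vec_sum[OF RM sc r] unfolding s_def by simp
    also have "\<dots> = (\<Sum>r'<m. (\<Sum>c<m. RM $$ (r,c) * adj $$ (c, r')) * rhs $ r') / det RM"
      by (simp add: sum_divide_distrib sum_distrib_left sum_distrib_right mult.assoc)
        (rule sum.swap)
    also have "\<dots> = (\<Sum>r'<m. (RM * adj) $$ (r, r') * rhs $ r') / det RM"
      using mult_mat_sum[OF RM adj(1) r] by simp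
    also have "\<dots> = (\<Sum>r'<m. (if r = r' then det RM * rhs $ r' else 0)) / det RM"
      unfolding adj(2) using r by (intro arg_cong[where f = "\<lambda>z. z / det RM"] sum.cong refl) auto
    also have "\<dots> = rhs $ r" using r detRM by simp
    finally show "(RM *\<^sub>v s) $ r = x (a r)" unfolding rhs_def using r by simp
  qed
  define t where "t = tv s"
  have diff0: "\<And>i. i < n \<Longrightarrow> x i - Wf t i = 0"
  proof -
    fix i assume i: "i < n"
    show "x i - Wf t i = 0"
    proof (rule E0[of "\<lambda>i. x i - Wf t i", OF _ _ i])
      fix j assume j: "j < n"
      show "x (\<sigma> j) - Wf t (\<sigma> j) = \<delta> * (x j - Wf t j)"
        using xs[OF j] Wf_sig_par[OF tv_par j] unfolding t_def by (simp add: algebra_simps)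
    next
      fix j assume "j \<in> Ahalf"
      then obtain r where r: "r < m" "j = a r" using a_surj by blast
      show "x j - Wf t j = 0" using RMs[OF sc r(1)] RMsol[OF r(1)] r unfolding t_def by simp
    qed
  qed
  show ?thesis using diff0 tv_par unfolding t_def by (intro exI[of _ "tv s"]) auto
qed

end


context sc_field begin

lemma par_n_perp:
  assumes py: "par_supp (n mod 2) y"
    and perp: "\<And>k. k < n \<Longrightarrow> k mod 2 = n mod 2 \<Longrightarrow> (\<Sum>i<n. om k i * Wf y i) = 0"
    and i0: "i0 < n"
  shows "Wf y i0 = 0"
proof -
  have vs: "\<And>i. i < n \<Longrightarrow> Wf y (\<sigma> i) = \<delta> * Wf y i" using Wf_sig_par[OF py] .
  have key: "(\<Sum>i<n. Wf y i * z i) = 0" for z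
  proof -
    define z1 where "z1 i = z i + \<delta> * z (\<sigma> i)" for i
    have z1s: "\<And>i. i < n \<Longrightarrow> z1 (\<sigma> i) = \<delta> * z1 i"
    proof -
      fix i assume i: "i < n"
      have "z1 (\<sigma> i) = z (\<sigma> i) + \<delta> * z i" unfolding z1_def using sig_invol[OF i] by simp
      also have "\<dots> = \<delta> * z i + (\<delta> * \<delta>) * z (\<sigma> i)" using delta_sq by simp
      also have "\<dots> = \<delta> * z1 i" unfolding z1_def by (simp add: algebra_simps)
      finally show "z1 (\<sigma> i) = \<delta> * z1 i" .
    qed
    obtain t where t: "par_supp (n mod 2) t" "\<And>i. i < n \<Longrightarrow> z1 i = Wf t i"
      using E_span[of z1, OF z1s] by blast
    have A: "(\<Sum>i<n. Wf y i * z1 i) = 0"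
    proof -
      have "(\<Sum>i<n. Wf y i * z1 i) = (\<Sum>i<n. \<Sum>k<n. Wf y i * (om k i * t k))"
        using t(2) unfolding Wf_def by (simp add: sum_distrib_left)
      also have "\<dots> = (\<Sum>k<n. \<Sum>i<n. Wf y i * (om k i * t k))" by (rule sum.swap)
      also have "\<dots> = (\<Sum>k<n. t k * (\<Sum>i<n. om k i * Wf y i))"
        by (simp add: sum_distrib_left algebra_simps)
      also have "\<dots> = 0"
      proof (rule sum.neutral, rule ballI)
        fix k assume k: "k \<in> {..<n}"
        show "t k * (\<Sum>i<n. om k i * Wf y i) = 0"
        proof (cases "k mod 2 = n mod 2")
          case True then show ?thesis using perp k by simp
        next
          case False then show ?thesis using t(1) k unfolding par_supp_def by simp
        qed
      qed
      finally show ?thesis .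
    qed
    have B: "(\<Sum>i<n. Wf y i * z (\<sigma> i)) = \<delta> * (\<Sum>i<n. Wf y i * z i)"
    proof -
      have "(\<Sum>i<n. Wf y i * z (\<sigma> i)) = (\<Sum>i<n. Wf y (\<sigma> i) * z (\<sigma> (\<sigma> i)))"
        by (rule sum_sig[symmetric])
      also have "\<dots> = (\<Sum>i<n. \<delta> * (Wf y i * z i))"
        using vs sig_invol by (intro sum.cong refl) simp
      finally show ?thesis by (simp add: sum_distrib_left)
    qed
    have "(\<Sum>i<n. Wf y i * z1 i) = (\<Sum>i<n. Wf y i * z i) + \<delta> * (\<Sum>i<n. Wf y i * z (\<sigma> i))"
      unfolding z1_def by (simp add: algebra_simps sum.distrib sum_distrib_left)
    also have "\<dots> = (\<Sum>i<n. Wf y i * z i) + (\<Sum>i<n. Wf y i * z i)"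
      unfolding B by (simp only: mult.assoc[symmetric] delta_sq mult.left_neutral)
    finally have "(\<Sum>i<n. Wf y i * z i) + (\<Sum>i<n. Wf y i * z i) = 0" using A by simp
    then show ?thesis by (rule two_cancel)
  qed
  have "(\<Sum>i<n. Wf y i * (if i = i0 then 1 else 0)) = Wf y i0"
    using i0 by (simp add: if_distrib sum.delta cong: if_cong)
  then show ?thesis using key[of "\<lambda>i. if i = i0 then 1 else 0"] by simp
qed

lemma sk_transfer: "j < n \<Longrightarrow> (\<Sum>i<n. sk i j * om k i) = - om (Suc k) j"
proof -
  assume j: "j < n"
  have "(\<Sum>i<n. sk i j * om k i) = (\<Sum>i<n. - (sk j i * om k i))"
  proof (rule sum.cong[OF refl])
    fix i assume "i \<in> {..<n}"
    then have "sk i j = - sk j i" using sk_skew[of i j] j by simp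
    then show "sk i j * om k i = - (sk j i * om k i)" by simp
  qed
  also have "\<dots> = - om (Suc k) j" using om_Suc[OF j] by (simp add: sum_negf)
  finally show ?thesis .
qed

lemma step3:
  assumes pi: "p < 2" and px: "par_supp p x"
    and perp: "\<And>k. k < n \<Longrightarrow> (\<Sum>i<n. om k i * Wf x i) = 0" and i: "i < n"
  shows "Wf x i = 0"
proof (cases "p = n mod 2")
  case True
  show ?thesis using par_n_perp[of x, OF _ _ i] px perp True by blast
next
  case False
  have p: "p = (n-1) mod 2" using pi_other[OF pi False n_pos] .
  define c1 where "c1 = x (n-1)"
  define c2 where "c2 = u (n-1)"
  have c2: "c2 \<noteq> 0" unfolding c2_def by (rule u_last)
  define z where "z k = c1 * u k + (- c2) * x k" for k
  have hz: "z (n-1) = 0" unfolding z_def c1_def c2_def by simp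
  have pz: "par_supp p z" unfolding par_supp_def
  proof (intro allI impI)
    fix k assume k: "k < n" "k mod 2 \<noteq> p"
    then have "u k = 0" using u_par unfolding par_supp_def p by simp
    moreover have "x k = 0" using px k unfolding par_supp_def by simp
    ultimately show "z k = 0" unfolding z_def by simp
  qed
  have Wz: "Wf z j = - c2 * Wf x j" if j: "j < n" for j
  proof -
    have "Wf z j = (\<Sum>k<n. c1 * (om k j * u k) + (- c2) * (om k j * x k))"
      unfolding Wf_def z_def by (intro sum.cong refl) (simp add: algebra_simps)
    also have "\<dots> = c1 * Wf u j + (- c2) * Wf x j"
      unfolding Wf_def by (simp only: sum.distrib sum_distrib_left)
    finally have "Wf z j = c1 * Wf u j + (- c2) * Wf x j" .
    then show ?thesis using u_prop(1) j unfolding rel_def by simp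
  qed
  define y where "y k = (if k = 0 then 0 else z (k-1))" for k
  have Wy: "Wf y i' = - c2 * (\<Sum>j<n. sk i' j * Wf x j)" if i': "i' < n" for i'
  proof -
    have "Wf y i' = (\<Sum>j<n. sk i' j * Wf z j)" unfolding y_def using shift_lemma[of z, OF hz i'] .
    also have "\<dots> = (\<Sum>j<n. - c2 * (sk i' j * Wf x j))" using Wz by (intro sum.cong refl) simp
    finally show ?thesis by (simp add: sum_distrib_left)
  qed
  have py: "par_supp (n mod 2) y" unfolding par_supp_def
  proof (intro allI impI)
    fix k assume k: "k < n" "k mod 2 \<noteq> n mod 2"
    show "y k = 0"
    proof (cases "k = 0")
      case True then show ?thesis unfolding y_def by simp
    next
      case False
      then have "(k-1) mod 2 \<noteq> p" using par_shift[of k n] n_pos k(2) p by simp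
      then show ?thesis unfolding y_def using False pz k(1) unfolding par_supp_def by simp
    qed
  qed
  have perpy: "(\<Sum>i<n. om k i * Wf y i) = 0" if k: "k < n" "k mod 2 = n mod 2" for k
  proof -
    have sk: "Suc k < n" using par_lt[OF k] .
    have "(\<Sum>i<n. om k i * Wf y i) = (\<Sum>i<n. \<Sum>j<n. - c2 * (sk i j * om k i * Wf x j))"
      using Wy by (simp add: sum_distrib_left algebra_simps)
    also have "\<dots> = (\<Sum>j<n. \<Sum>i<n. - c2 * (sk i j * om k i * Wf x j))" by (rule sum.swap)
    also have "\<dots> = (\<Sum>j<n. - c2 * ((\<Sum>i<n. sk i j * om k i) * Wf x j))"
      by (simp add: sum_distrib_left sum_distrib_right)
    also have "\<dots> = (\<Sum>j<n. c2 * (om (Suc k) j * Wf x j))"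
      using sk_transfer by (intro sum.cong refl) simp
    also have "\<dots> = c2 * (\<Sum>j<n. om (Suc k) j * Wf x j)" by (simp add: sum_distrib_left)
    also have "\<dots> = 0" using perp[OF sk] by simp
    finally show ?thesis .
  qed
  have ry: "rel y" unfolding rel_def using par_n_perp[of y, OF py perpy] by blast
  have yl: "y (n-1) = 0"
  proof (cases "n = 1")
    case True then show ?thesis unfolding y_def by simp
  next
    case False
    then have n2: "n \<ge> 2" using n_pos by simp
    then have "(n-2) mod 2 \<noteq> p" using par_pred2 p by simp
    then have "z (n-2) = 0" using pz n2 unfolding par_supp_def by simp
    then show ?thesis unfolding y_def using n2 by (simp add: numeral_2_eq_2)
  qed
  have y0: "\<And>k. k < n \<Longrightarrow> y k = 0" using rel_last0[OF ry yl] by blast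
  have z0: "z k = 0" if k: "k < n" for k
  proof (cases "k = n-1")
    case True then show ?thesis using hz by simp
  next
    case False
    then have "Suc k < n" using k by simp
    then show ?thesis using y0[of "Suc k"] unfolding y_def by simp
  qed
  have "Wf z i = 0" unfolding Wf_def using z0 by simp
  then show ?thesis using Wz[OF i] c2 by simp
qed

lemma in_col:
  assumes perp: "\<And>k. k < n \<Longrightarrow> (\<Sum>i<n. om k i * v i) = 0"
    and vv: "(\<Sum>i<n. v i * v i) = 0" and i1: "i1 < n" "v i1 \<noteq> 0"
  shows "\<exists>x. \<forall>i<n. v i = Wf x i"
proof -
  define N where "N = mat n n (\<lambda>(i,k). if k = j0 then v i else om k i)"
  have N: "N \<in> carrier_mat n n" unfolding N_def by simp
  have NT: "transpose_mat N \<in> carrier_mat n n" using N by simp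
  have NTv: "transpose_mat N *\<^sub>v vec n v = 0\<^sub>v n"
  proof (rule eq_vecI)
    fix k assume "k < dim_vec (0\<^sub>v n :: 'a vec)"
    then have k: "k < n" by simp
    have "(transpose_mat N *\<^sub>v vec n v) $ k = (\<Sum>i<n. transpose_mat N $$ (k,i) * vec n v $ i)"
      using mult_vec_sum[OF NT _ k] by simp
    also have "\<dots> = (\<Sum>i<n. (if k = j0 then v i else om k i) * v i)"
      unfolding N_def using k by (intro sum.cong refl) simp
    also have "\<dots> = 0" using vv perp[OF k] by (cases "k = j0") (auto simp: mult.commute)
    finally show "(transpose_mat N *\<^sub>v vec n v) $ k = 0\<^sub>v n $ k" using k by simp
  qed (simp add: N_def)
  have vnz: "vec n v \<noteq> 0\<^sub>v n"
  proof
    assume "vec n v = 0\<^sub>v n"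
    then have "vec n v $ i1 = 0\<^sub>v n $ i1" by simp
    then show False using i1 by simp
  qed
  have "\<exists>w. w \<in> carrier_vec n \<and> w \<noteq> 0\<^sub>v n \<and> transpose_mat N *\<^sub>v w = 0\<^sub>v n"
    using NTv vnz by (intro exI[of _ "vec n v"]) auto
  then have "det (transpose_mat N) = 0"
    using det_0_iff_vec_prod_zero_field[OF NT] by simp
  then have "det N = 0" using det_transpose[OF N] by simp
  then obtain t where t: "t \<in> carrier_vec n" "t \<noteq> 0\<^sub>v n" "N *\<^sub>v t = 0\<^sub>v n"
    using det_0_iff_vec_prod_zero_field[OF N] by blast
  have eq: "(\<Sum>k<n. (if k = j0 then v i else om k i) * t $ k) = 0" if i: "i < n" for i
  proof -
    have "(N *\<^sub>v t) $ i = 0" using t(3) i by simp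
    moreover have "(N *\<^sub>v t) $ i = (\<Sum>k<n. N $$ (i,k) * t $ k)" using mult_vec_sum[OF N t(1) i] .
    moreover have "(\<Sum>k<n. N $$ (i,k) * t $ k) = (\<Sum>k<n. (if k = j0 then v i else om k i) * t $ k)"
      unfolding N_def using i by (intro sum.cong refl) simp
    ultimately show ?thesis by simp
  qed
  define c where "c = t $ j0"
  show ?thesis
  proof (cases "c = 0")
    case True
    have "\<And>i. i < n \<Longrightarrow> (\<Sum>k<n. om k i * t $ k) = 0"
    proof -
      fix i assume i: "i < n"
      have "(\<Sum>k<n. om k i * t $ k) = (\<Sum>k<n. (if k = j0 then v i else om k i) * t $ k)"
        using True unfolding c_def by (intro sum.cong refl) simp
      then show "(\<Sum>k<n. om k i * t $ k) = 0" using eq[OF i] by simp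
    qed
    then have "\<And>k. k < n \<Longrightarrow> t $ k = 0" using indep[of "\<lambda>k. t $ k"] True unfolding c_def by blast
    then have "t = 0\<^sub>v n" using t(1) by (intro eq_vecI) auto
    then show ?thesis using t(2) by simp
  next
    case False
    define x where "x k = (if k = j0 then 0 else - (t $ k) / c)" for k
    have "v i = Wf x i" if i: "i < n" for i
    proof -
      have cx: "c * Wf x i = (\<Sum>k<n. om k i * (if k = j0 then 0 else - (t $ k)))"
        unfolding Wf_def sum_distrib_left
      proof (rule sum.cong[OF refl])
        fix k
        show "c * (om k i * x k) = om k i * (if k = j0 then 0 else - t $ k)"
        proof (cases "k = j0")
          case True then show ?thesis by (simp add: x_def)
        next
          case kF: False
          have "c * (om k i * x k) = om k i * (c * x k)" by (simp only: mult.left_commute)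
          also have "c * x k = - t $ k" using False kF by (simp add: x_def)
          finally show ?thesis using kF by simp
        qed
      qed
      have "(\<Sum>k<n. (if k = j0 then v i else om k i) * t $ k) + (\<Sum>k<n. om k i * (if k = j0 then 0 else - (t $ k)))
          = (\<Sum>k<n. if k = j0 then v i * t $ k else 0)"
        unfolding sum.distrib[symmetric] by (intro sum.cong refl) (simp add: algebra_simps)
      also have "\<dots> = v i * c" unfolding c_def using j0 by simp
      finally have "c * Wf x i = v i * c" using eq[OF i] cx by simp
      then show ?thesis using False by (simp add: mult.commute)
    qed
    then show ?thesis by blast
  qed
qed

lemma main_loc:
  assumes perp: "\<And>k. k < n \<Longrightarrow> (\<Sum>i<n. om k i * v i) = 0"
    and vv: "(\<Sum>i<n. v i * v i) = 0" and i: "i < n"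
  shows "v i = 0"
proof (rule ccontr)
  assume nz: "v i \<noteq> 0"
  obtain x where x: "\<And>i. i < n \<Longrightarrow> v i = Wf x i" using in_col[OF perp vv i nz] by blast
  have psig: "(\<Sum>i<n. om k i * v (\<sigma> i)) = 0" if k: "k < n" for k
  proof -
    have "(\<Sum>i<n. om k i * v (\<sigma> i)) = (\<Sum>i<n. (-1)^k * (om k (\<sigma> i) * v (\<sigma> i)))"
      using om_sigma by (intro sum.cong refl) (simp add: mult.assoc[symmetric] power_mult_distrib[symmetric])
    also have "\<dots> = (-1)^k * (\<Sum>i<n. om k (\<sigma> i) * v (\<sigma> i))" by (simp add: sum_distrib_left)
    also have "\<dots> = (-1)^k * (\<Sum>i<n. om k i * v i)" using sum_sig[of "\<lambda>i. om k i * v i"] by simp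
    finally show ?thesis using perp[OF k] by simp
  qed
  define xp where "xp k = x k + (-1)^k * x k" for k
  define xm where "xm k = x k + - ((-1)^k * x k)" for k
  have Wxp: "Wf xp j = v j + v (\<sigma> j)" if j: "j < n" for j
  proof -
    have "Wf xp j = Wf x j + Wf (\<lambda>k. (-1)^k * x k) j" unfolding Wf_def xp_def
      by (simp add: algebra_simps sum.distrib)
    then show ?thesis using Wf_D[OF j] x j sig_lt by simp
  qed
  have Wxm: "Wf xm j = v j - v (\<sigma> j)" if j: "j < n" for j
  proof -
    have "Wf xm j = Wf x j - Wf (\<lambda>k. (-1)^k * x k) j" unfolding Wf_def xm_def
      by (simp add: algebra_simps sum.distrib sum_subtractf)
    then show ?thesis using Wf_D[OF j] x j sig_lt by simp
  qed
  have pxp: "par_supp 0 xp" unfolding par_supp_def xp_def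
    by (auto simp: neg1_npar[of _ 0, simplified])
  have pxm: "par_supp 1 xm" unfolding par_supp_def xm_def
    by (auto simp: neg1_par[of _ 0, simplified])
  have a: "Wf xp i = 0"
    using step3[of 0 xp, OF _ pxp _ i] Wxp psig perp by (simp add: distrib_left sum.distrib)
  have b: "Wf xm i = 0"
    using step3[of 1 xm, OF _ pxm _ i] Wxm psig perp by (simp add: right_diff_distrib sum_subtractf)
  have "v i + v i = 0" using a b Wxp[OF i] Wxm[OF i] by (simp add: algebra_simps)
  then show False using two_cancel nz by blast
qed

end


lemma rank_extract:
  fixes A :: "'a::field mat"
  assumes A: "A \<in> carrier_mat n n" and r: "vec_space.rank n A = n - 1" and n: "n \<ge> 1"
  shows "\<exists>j0<n. \<forall>y \<in> carrier_vec n. A *\<^sub>v y = 0\<^sub>v n \<longrightarrow> y $ j0 = 0 \<longrightarrow> y = 0\<^sub>v n"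
proof -
  interpret vs: vec_space "TYPE('a)" n .
  obtain S where S: "maximal S (\<lambda>T. T \<subseteq> set (cols A) \<and> vs.lin_indpt T)"
    using maximal_exists[of "(\<lambda>T. T \<subseteq> set (cols A) \<and> vs.lin_indpt T)" "card (set (cols A))" "{}"]
    by (meson List.finite_set card_mono empty_iff empty_subsetI vs.finite_lin_indpt2 rev_finite_subset)
  have cS: "card S = n - 1" using vs.rank_card_indpt[OF A S] r by simp
  have SS: "S \<subseteq> set (cols A)" "vs.lin_indpt S" using S unfolding maximal_def by auto
  have finS: "finite S" using SS(1) finite_subset by blast
  have Scar: "S \<subseteq> carrier_vec n" using SS(1) cols_dim A by blast
  have colsn: "\<exists>k<n. col A k = s" if "s \<in> S" for s
  proof -
    have "s \<in> set (cols A)" using that SS(1) by blast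
    then obtain k where "k < length (cols A)" "cols A ! k = s" by (metis in_set_conv_nth)
    then show ?thesis using A by auto
  qed
  define f where "f s = (SOME k. k < n \<and> col A k = s)" for s
  have f: "f s < n \<and> col A (f s) = s" if "s \<in> S" for s
    unfolding f_def using someI_ex[OF colsn[OF that]] .
  have finj: "inj_on f S"
  proof (rule inj_onI)
    fix s s' assume "s \<in> S" "s' \<in> S" "f s = f s'"
    then show "s = s'" using f by metis
  qed
  have cI: "card (f ` S) = n - 1" using card_image[OF finj] cS by simp
  have sub: "f ` S \<subseteq> {..<n}" using f by auto
  have "f ` S \<noteq> {..<n}" using cI n by (metis card_lessThan diff_less less_numeral_extra(1) less_le_trans nat_neq_iff)
  then obtain j0 where j0: "j0 < n" "j0 \<notin> f ` S" using sub by blast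
  have I: "f ` S = {..<n} - {j0}"
  proof (rule card_subset_eq)
    show "finite ({..<n} - {j0})" by simp
    show "f ` S \<subseteq> {..<n} - {j0}" using sub j0 by blast
    show "card (f ` S) = card ({..<n} - {j0})" using cI j0 by simp
  qed
  show ?thesis
  proof (intro exI[of _ j0] conjI ballI impI)
    show "j0 < n" by (rule j0)
    fix y :: "'a vec" assume y: "y \<in> carrier_vec n" "A *\<^sub>v y = 0\<^sub>v n" "y $ j0 = 0"
    define a where "a s = y $ (f s)" for s
    have lc: "vs.lincomb a S = 0\<^sub>v n"
    proof (rule eq_vecI)
      show "dim_vec (vs.lincomb a S) = dim_vec (0\<^sub>v n :: 'a vec)"
        using vs.lincomb_dim[OF finS Scar] by simp
      fix i assume "i < dim_vec (0\<^sub>v n :: 'a vec)"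
      then have i: "i < n" by simp
      have "vs.lincomb a S $ i = (\<Sum>s\<in>S. a s * s $ i)" using vs.lincomb_index[OF i Scar] .
      also have "\<dots> = (\<Sum>s\<in>S. y $ (f s) * A $$ (i, f s))"
      proof (rule sum.cong[OF refl])
        fix s assume s: "s \<in> S"
        have e1: "col A (f s) = s" using f[OF s] by simp
        have e2: "col A (f s) $ i = A $$ (i, f s)" using A i f[OF s, THEN conjunct1] by simp
        have "s $ i = A $$ (i, f s)" using e1 e2 by simp
        then show "a s * s $ i = y $ (f s) * A $$ (i, f s)" unfolding a_def by simp
      qed
      also have "\<dots> = (\<Sum>k \<in> f ` S. y $ k * A $$ (i, k))"
        using sum.reindex[OF finj, of "\<lambda>k. y $ k * A $$ (i, k)"] by simp
      also have "\<dots> = (\<Sum>k \<in> {..<n} - {j0}. y $ k * A $$ (i, k))" unfolding I ..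
      also have "\<dots> = (\<Sum>k<n. y $ k * A $$ (i, k))"
        using sum.remove[of "{..<n}" j0 "\<lambda>k. y $ k * A $$ (i, k)"] j0 y(3) by simp
      also have "\<dots> = (A *\<^sub>v y) $ i" using mult_vec_sum[OF A y(1) i] by (simp add: mult.commute)
      also have "\<dots> = 0" using y(2) i by simp
      finally show "vs.lincomb a S $ i = 0\<^sub>v n $ i" using i by simp
    qed
    have az: "a s = 0" if s: "s \<in> S" for s
    proof (rule ccontr)
      assume "a s \<noteq> 0"
      then have "vs.lin_dep S"
        using vs.lin_dep_crit[OF finS subset_refl _ s, of a] lc by simp
      then show False using SS(2) by simp
    qed
    show "y = 0\<^sub>v n"
    proof (rule eq_vecI)
      fix k assume "k < dim_vec (0\<^sub>v n :: 'a vec)"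
      then have k: "k < n" by simp
      show "y $ k = 0\<^sub>v n $ k"
      proof (cases "k = j0")
        case True then show ?thesis using y(3) k by simp
      next
        case False
        then have "k \<in> f ` S" using I k by blast
        then obtain s where "s \<in> S" "k = f s" by blast
        then show ?thesis using az[of s] k unfolding a_def by simp
      qed
    qed (use y(1) in simp)
  qed
qed

lemma two_ne_0_mod_ring: "CARD('p::prime_card) \<noteq> 2 \<Longrightarrow> (2::'p mod_ring) \<noteq> 0"
proof
  assume c: "CARD('p) \<noteq> 2" and z: "(2::'p mod_ring) = 0"
  have "of_nat 2 = (0::'p mod_ring)" using z by simp
  then have d: "CARD('p) dvd 2" by (rule of_nat_0_mod_ring_dvd)
  have p: "prime (CARD('p))" by (rule prime_card)
  have "CARD('p) \<le> 2" using dvd_imp_le[OF d] by simp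
  moreover have "CARD('p) > 1" using prime_gt_1_nat[OF p] .
  ultimately show False using c by simp
qed

theorem theorem1p8:
  fixes n :: nat and S :: "int mat"
  assumes "skew_adjacency_matrix n S"
    and "self_converse n S"
    and "det (walk_matrix n S) \<noteq> 0"
    and "CARD('p::prime_card) \<noteq> 2"
    and "vec_space.rank n (mod_p_mat (walk_matrix n S) :: 'p mod_ring mat) = n - 1"
  shows "\<forall>v :: 'p mod_ring vec. v \<in> carrier_vec n \<longrightarrow> v \<noteq> 0\<^sub>v n \<longrightarrow>
           transpose_mat (mod_p_mat (walk_matrix n S)) *\<^sub>v v = 0\<^sub>v n \<longrightarrow> v \<bullet> v \<noteq> 0"
proof (intro allI impI)
  fix v :: "'p mod_ring vec"
  assume v: "v \<in> carrier_vec n" "v \<noteq> 0\<^sub>v n"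
    "transpose_mat (mod_p_mat (walk_matrix n S)) *\<^sub>v v = 0\<^sub>v n"
  show "v \<bullet> v \<noteq> 0"
  proof
    assume vv: "v \<bullet> v = 0"
    have Sc: "S \<in> carrier_mat n n" and St: "transpose_mat S = - S"
      using assms(1) unfolding skew_adjacency_matrix_def by auto
    have skew: "S $$ (j,i) = - S $$ (i,j)" if "i < n" "j < n" for i j
    proof -
      have "transpose_mat S $$ (i,j) = (- S) $$ (i,j)" using St by simp
      then show ?thesis using that Sc by simp
    qed
    obtain P where P: "permutation_matrix n P" "transpose_mat P * S * P = transpose_mat S"
      using assms(2) unfolding self_converse_def by blast
    obtain \<sigma> where \<sigma>: "\<sigma> permutes {..<n}" "P = mat n n (\<lambda>(i,j). if \<sigma> j = i then 1 else 0)"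
      using P(1) unfolding permutation_matrix_def by blast
    have slt: "\<sigma> i < n" if "i < n" for i using permutes_in_image[OF \<sigma>(1)] that by simp
    have Pc: "P \<in> carrier_mat n n" using \<sigma>(2) by simp
    have PTc: "transpose_mat P \<in> carrier_mat n n" using Pc by simp
    have PTS: "(transpose_mat P * S) $$ (i,b) = S $$ (\<sigma> i, b)" if "i < n" "b < n" for i b
    proof -
      have "(transpose_mat P * S) $$ (i,b) = (\<Sum>a<n. transpose_mat P $$ (i,a) * S $$ (a,b))"
        using mult_mat_sum[OF PTc Sc that] .
      also have "\<dots> = (\<Sum>a<n. if a = \<sigma> i then S $$ (a,b) else 0)"
        using that \<sigma>(2) by (intro sum.cong refl) auto
      also have "\<dots> = S $$ (\<sigma> i, b)" using slt[OF that(1)] by (simp add: sum.delta)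
      finally show ?thesis .
    qed
    have PTSc: "transpose_mat P * S \<in> carrier_mat n n" using PTc Sc by simp
    have sc: "S $$ (\<sigma> i, \<sigma> j) = - S $$ (i,j)" if "i < n" "j < n" for i j
    proof -
      have "(transpose_mat P * S * P) $$ (i,j) = (\<Sum>b<n. (transpose_mat P * S) $$ (i,b) * P $$ (b,j))"
        using mult_mat_sum[OF PTSc Pc that] .
      also have "\<dots> = (\<Sum>b<n. if b = \<sigma> j then S $$ (\<sigma> i, b) else 0)"
        using that \<sigma>(2) PTS by (intro sum.cong refl) auto
      also have "\<dots> = S $$ (\<sigma> i, \<sigma> j)" using slt[OF that(2)] by (simp add: sum.delta)
      finally have "S $$ (\<sigma> i, \<sigma> j) = transpose_mat S $$ (i,j)" using P(2) by simp
      also have "\<dots> = - S $$ (i,j)" using skew[OF that(2) that(1)] that Sc by simp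
      finally show ?thesis .
    qed
    interpret sc_setting n S \<sigma>
    proof
      show "S \<in> carrier_mat n n" by (rule Sc)
      show "\<sigma> permutes {..<n}" by (rule \<sigma>(1))
      show "det (walk_matrix n S) \<noteq> 0" by (rule assms(3))
    next
      fix i j :: nat assume "i < n" "j < n"
      then show "S $$ (j,i) = - S $$ (i,j)" by (rule skew)
    next
      fix i j :: nat assume "i < n" "j < n"
      then show "S $$ (\<sigma> i, \<sigma> j) = - S $$ (i,j)" by (rule sc)
    qed
    define Wk where "Wk = (mod_p_mat (walk_matrix n S) :: 'p mod_ring mat)"
    have Wkc: "Wk \<in> carrier_mat n n" unfolding Wk_def mod_p_mat_def using walk_carrier by simp
    have Wke: "Wk $$ (i,k) = of_int (wz S n k i)" if "i < n" "k < n" for i k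
    proof -
      have d: "dim_row (walk_matrix n S) = n" "dim_col (walk_matrix n S) = n"
        using walk_carrier[of n S] by auto
      show ?thesis unfolding Wk_def mod_p_mat_def using walk_entry[OF Sc that] that d
        by (simp add: index_map_mat)
    qed
    have n1: "n \<ge> 1"
    proof (rule ccontr)
      assume "\<not> n \<ge> 1"
      then have "n = 0" by simp
      then have "v = 0\<^sub>v n" using v(1) by (intro eq_vecI) auto
      then show False using v(2) by simp
    qed
    have rk: "vec_space.rank n Wk = n - 1" using assms(5) unfolding Wk_def .
    have "det Wk = 0"
    proof (rule ccontr)
      assume "det Wk \<noteq> 0"
      then have "vec_space.rank n Wk = n" using vec_space.det_rank_iff[OF Wkc] by simp
      then show False using rk n1 by simp
    qed
    then obtain u where u: "u \<in> carrier_vec n" "u \<noteq> 0\<^sub>v n" "Wk *\<^sub>v u = 0\<^sub>v n"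
      using det_0_iff_vec_prod_zero_field[OF Wkc] by blast
    have Wsum: "(Wk *\<^sub>v y) $ i = (\<Sum>k<n. of_int (wz S n k i) * y $ k)" if "y \<in> carrier_vec n" "i < n" for y i
      using mult_vec_sum[OF Wkc that] Wke that by simp
    obtain j0 where j0: "j0 < n" "\<forall>y \<in> carrier_vec n. Wk *\<^sub>v y = 0\<^sub>v n \<longrightarrow> y $ j0 = 0 \<longrightarrow> y = 0\<^sub>v n"
      using rank_extract[OF Wkc rk n1] by blast
    interpret sc_field n S \<sigma> "\<lambda>k i. of_int (wz S n k i) :: 'p mod_ring" "\<lambda>i j. of_int (S $$ (i,j))" j0
    proof unfold_locales
      show "(2::'p mod_ring) \<noteq> 0" using two_ne_0_mod_ring[OF assms(4)] .
      show "j0 < n" by (rule j0(1))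
    next
      fix y :: "nat \<Rightarrow> 'p mod_ring" and k
      assume h: "\<And>i. i < n \<Longrightarrow> (\<Sum>k<n. of_int (wz S n k i) * y k) = 0" "y j0 = 0" "k < n"
      have "Wk *\<^sub>v vec n y = 0\<^sub>v n"
      proof (rule eq_vecI)
        fix i assume "i < dim_vec (0\<^sub>v n :: 'p mod_ring vec)"
        then have i: "i < n" by simp
        show "(Wk *\<^sub>v vec n y) $ i = 0\<^sub>v n $ i" using Wsum[of "vec n y" i] h(1)[OF i] i by simp
      qed (use Wkc in simp)
      then have "vec n y = 0\<^sub>v n" using j0(2) h(2) j0(1) by simp
      then have "vec n y $ k = 0\<^sub>v n $ k" by simp
      then show "y k = 0" using h(3) by simp
    next
      show "\<exists>u. (\<forall>i<n. (\<Sum>k<n. of_int (wz S n k i) * u k) = (0::'p mod_ring)) \<and> (\<exists>k<n. u k \<noteq> 0)"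
      proof (intro exI[of _ "\<lambda>k. u $ k"] conjI allI impI)
        fix i assume i: "i < n"
        show "(\<Sum>k<n. of_int (wz S n k i) * u $ k) = (0::'p mod_ring)"
          using Wsum[OF u(1) i] u(3) i by simp
      next
        show "\<exists>k<n. u $ k \<noteq> 0"
        proof (rule ccontr)
          assume "\<not> (\<exists>k<n. u $ k \<noteq> 0)"
          then have "u = 0\<^sub>v n" using u(1) by (intro eq_vecI) auto
          then show False using u(2) by simp
        qed
      qed
    qed simp_all
    have WTc: "transpose_mat Wk \<in> carrier_mat n n" using Wkc by simp
    have perp: "(\<Sum>i<n. of_int (wz S n k i) * v $ i) = (0::'p mod_ring)" if k: "k < n" for k
    proof -
      have "(transpose_mat Wk *\<^sub>v v) $ k = (\<Sum>i<n. transpose_mat Wk $$ (k,i) * v $ i)"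
        using mult_vec_sum[OF WTc v(1) k] .
      also have "\<dots> = (\<Sum>i<n. of_int (wz S n k i) * v $ i)"
        using Wke k Wkc by (intro sum.cong refl) simp
      finally show ?thesis using v(3) k unfolding Wk_def by simp
    qed
    have vv2: "(\<Sum>i<n. v $ i * v $ i) = 0"
      using vv v(1) by (simp add: scalar_prod_def atLeast0LessThan)
    have "\<forall>i<n. v $ i = 0" using main_loc[of "\<lambda>i. v $ i"] perp vv2 by blast
    then have "v = 0\<^sub>v n" using v(1) by (intro eq_vecI) auto
    then show False using v(2) by simp
  qed
qed


end
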